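(* Let $H$ be a nonempty bounded subset of $\mathbb R^n$ and let $h\colon\mathbb R^n\to\mathbb R^n$ be continuously differentiable with $\sup_{x\in H}\mu(h'(x))<0$. Then the autonomous equation $x'=h(x)$ has the conditional Lipschitz shadowing property in $H$.
   Context: $|\cdot|$ is a fixed norm on $\mathbb R^n$ and also denotes the induced matrix norm. The logarithmic norm of $A\in\mathbb R^{n\times n}$ is $\mu(A):=\lim_{h\to0^+}\frac{|I+hA|-1}{h}$; $h'(x)$ is the Jacobian matrix of $h$ at $x$. For $\tau\in(0,\infty]$, a pseudosolution of $x'=h(x)$ on $[0,\tau)$ is a $C^1$ map $y\colon[0,\tau)\to\mathbb R^n$ with $\sigma_y:=\sup_{0\le t<\tau}|y'(t)-h(y(t))|<\infty$. The equation has the conditional Lipschitz shadowing property in $H\neq\emptyset$ if there exist $\varepsilon_0,\kappa>0$ such that whenever $0<\varepsilon\le\varepsilon_0$ and $y$ is a pseudosolution on $[0,\tau)$ ($\tau\in(0,\infty]$) with $\sigma_y\le\varepsilon$ and $y(t)\in H$ for all $t\in[0,\tau)$, there is a solution $x$ defined on $[0,\tau)$ with $\sup_{0\le t<\tau}|x(t)-y(t)|\le\kappa\varepsilon$. *)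

theory Defs
  imports "HOL-Analysis.Analysis"
begin

definition is_norm :: "(real^'n \<Rightarrow> real) \<Rightarrow> bool" where
  "is_norm N \<longleftrightarrow> (\<forall>x. 0 \<le> N x) \<and> (\<forall>x. N x = 0 \<longleftrightarrow> x = 0)
     \<and> (\<forall>c x. N (c *\<^sub>R x) = \<bar>c\<bar> * N x) \<and> (\<forall>x y. N (x + y) \<le> N x + N y)"

definition mat_norm :: "(real^'n \<Rightarrow> real) \<Rightarrow> real^'n^'n \<Rightarrow> real" where
  "mat_norm N A = (SUP x\<in>{x. N x = 1}. N (A *v x))"

definition log_norm :: "(real^'n \<Rightarrow> real) \<Rightarrow> real^'n^'n \<Rightarrow> real" where
  "log_norm N A = Lim (at_right 0) (\<lambda>s. (mat_norm N (mat 1 + s *\<^sub>R A) - 1) / s)"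

definition jacobian :: "(real^'n \<Rightarrow> real^'n) \<Rightarrow> real^'n \<Rightarrow> real^'n^'n" where
  "jacobian h x = matrix (frechet_derivative h (at x))"

definition dom_int :: "ereal \<Rightarrow> real set" where
  "dom_int \<tau> = {t. 0 \<le> t \<and> ereal t < \<tau>}"

definition C1_on_with :: "ereal \<Rightarrow> (real \<Rightarrow> real^'n) \<Rightarrow> (real \<Rightarrow> real^'n) \<Rightarrow> bool" where
  "C1_on_with \<tau> y y' \<longleftrightarrow> continuous_on (dom_int \<tau>) y' \<and>
     (\<forall>t\<in>dom_int \<tau>. (y has_vector_derivative y' t) (at t within dom_int \<tau>))"

definition pseudosolution :: "(real^'n \<Rightarrow> real) \<Rightarrow> (real^'n \<Rightarrow> real^'n) \<Rightarrow> ereal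
    \<Rightarrow> (real \<Rightarrow> real^'n) \<Rightarrow> (real \<Rightarrow> real^'n) \<Rightarrow> bool" where
  "pseudosolution N h \<tau> y y' \<longleftrightarrow> C1_on_with \<tau> y y' \<and>
     bdd_above ((\<lambda>t. N (y' t - h (y t))) ` dom_int \<tau>)"

definition sigma :: "(real^'n \<Rightarrow> real) \<Rightarrow> (real^'n \<Rightarrow> real^'n) \<Rightarrow> ereal
    \<Rightarrow> (real \<Rightarrow> real^'n) \<Rightarrow> (real \<Rightarrow> real^'n) \<Rightarrow> real" where
  "sigma N h \<tau> y y' = (SUP t\<in>dom_int \<tau>. N (y' t - h (y t)))"

definition is_solution :: "(real^'n \<Rightarrow> real^'n) \<Rightarrow> ereal \<Rightarrow> (real \<Rightarrow> real^'n) \<Rightarrow> bool" where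
  "is_solution h \<tau> x \<longleftrightarrow>
     (\<forall>t\<in>dom_int \<tau>. (x has_vector_derivative h (x t)) (at t within dom_int \<tau>))"

definition cond_lipschitz_shadowing ::
    "(real^'n \<Rightarrow> real) \<Rightarrow> (real^'n \<Rightarrow> real^'n) \<Rightarrow> (real^'n) set \<Rightarrow> bool" where
  "cond_lipschitz_shadowing N h H \<longleftrightarrow> (\<exists>\<epsilon>0 > 0. \<exists>\<kappa> > 0.
     \<forall>\<epsilon> \<tau> y y'. 0 < \<epsilon> \<and> \<epsilon> \<le> \<epsilon>0 \<and> 0 < \<tau> \<and> pseudosolution N h \<tau> y y'
        \<and> sigma N h \<tau> y y' \<le> \<epsilon> \<and> (\<forall>t\<in>dom_int \<tau>. y t \<in> H)
      \<longrightarrow> (\<exists>x. is_solution h \<tau> x \<and>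
             (SUP t\<in>dom_int \<tau>. N (x t - y t)) \<le> \<kappa> * \<epsilon>
             \<and> bdd_above ((\<lambda>t. N (x t - y t)) ` dom_int \<tau>)))"

end

theory Submission
  imports Defs
begin

locale nrm =
  fixes N :: "real^'n \<Rightarrow> real"
  assumes isn: "is_norm N"
begin

lemma N_nonneg: "0 \<le> N x" using isn by (simp add: is_norm_def)
lemma N_zero_iff: "N x = 0 \<longleftrightarrow> x = 0" using isn by (simp add: is_norm_def)
lemma N_scale: "N (c *\<^sub>R x) = \<bar>c\<bar> * N x" using isn by (simp add: is_norm_def)
lemma N_tri: "N (x + y) \<le> N x + N y" using isn by (simp add: is_norm_def)
lemma N_0[simp]: "N 0 = 0" using N_zero_iff by simp
lemma N_minus: "N (- x) = N x" using N_scale[of "-1" x] by simp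
lemma N_diff_commute: "N (x - y) = N (y - x)" using N_minus[of "x - y"] by simp
lemma N_tri_diff: "N x - N y \<le> N (x - y)"
  using N_tri[of "x - y" y] by simp
lemma N_abs_diff: "\<bar>N x - N y\<bar> \<le> N (x - y)"
  using N_tri_diff[of x y] N_tri_diff[of y x] N_diff_commute[of x y] by linarith

lemma N_sum: "N (sum f S) \<le> (\<Sum>i\<in>S. N (f i))"
proof (induction S rule: infinite_finite_induct)
  case (insert x F)
  then show ?case using N_tri[of "f x" "sum f F"] by simp
qed auto

lemma N_upper: "\<exists>c1>0. \<forall>v. N v \<le> c1 * norm v"
proof -
  define c where "c = (\<Sum>b\<in>(Basis::(real^'n) set). N b) + 1"
  have c0: "c > 0" unfolding c_def using N_nonneg by (simp add: add_nonneg_pos sum_nonneg)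
  have "N v \<le> c * norm v" for v
  proof -
    have "N v = N (\<Sum>b\<in>Basis. (v \<bullet> b) *\<^sub>R b)" by (simp add: euclidean_representation)
    also have "\<dots> \<le> (\<Sum>b\<in>Basis. N ((v \<bullet> b) *\<^sub>R b))" by (rule N_sum)
    also have "\<dots> = (\<Sum>b\<in>Basis. \<bar>v \<bullet> b\<bar> * N b)" by (simp add: N_scale)
    also have "\<dots> \<le> (\<Sum>b\<in>Basis. norm v * N b)"
      by (intro sum_mono mult_right_mono Basis_le_norm N_nonneg)
    also have "\<dots> = norm v * (\<Sum>b\<in>Basis. N b)" by (simp add: sum_distrib_left)
    also have "\<dots> \<le> c * norm v" unfolding c_def by (simp add: algebra_simps)
    finally show ?thesis .
  qed
  with c0 show ?thesis by blast
qed

lemma N_cont: "continuous_on S N"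
proof -
  obtain c1 where c1: "c1 > 0" "\<And>v. N v \<le> c1 * norm v" using N_upper by blast
  have "\<bar>N x - N y\<bar> \<le> c1 * dist x y" for x y
    using N_abs_diff[of x y] c1(2)[of "x - y"] by (simp add: dist_norm)
  then show ?thesis
    by (intro lipschitz_on_continuous_on[of "c1"] lipschitz_onI) (use c1 in \<open>auto simp: dist_real_def\<close>)
qed

lemma N_lower: "\<exists>c2>0. \<forall>v. norm v \<le> c2 * N v"
proof -
  have cpt: "compact (sphere (0::real^'n) 1)" by simp
  have ne: "sphere (0::real^'n) 1 \<noteq> {}" by simp
  obtain u where u: "u \<in> sphere 0 1" "\<And>w. w \<in> sphere 0 1 \<Longrightarrow> N u \<le> N w"
    using continuous_attains_inf[OF cpt ne N_cont] by blast
  have u0: "N u > 0" using u(1) N_nonneg[of u] N_zero_iff[of u] by force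
  have "norm v \<le> (1 / N u) * N v" for v
  proof (cases "v = 0")
    case False
    have "N u \<le> N ((1 / norm v) *\<^sub>R v)" using u(2) False by simp
    also have "\<dots> = N v / norm v" by (simp add: N_scale)
    finally show ?thesis using u0 False by (simp add: field_simps)
  qed simp
  then show ?thesis using u0 by (intro exI[of _ "1 / N u"]) auto
qed

end

lemma norm_mv_le: "norm ((A::real^'n^'n) *v v) \<le> (real CARD('n) * real CARD('n) * norm A) * norm v"
proof -
  have "onorm ((*v) A) \<le> real CARD('n) * real CARD('n) * norm A"
    by (rule onorm_le_matrix_component) (rule order_trans[OF component_le_norm_cart Finite_Cartesian_Product.norm_nth_le])
  moreover have "norm (A *v v) \<le> onorm ((*v) A) * norm v"
    by (rule onorm) simp
  ultimately show ?thesis by (meson mult_right_mono norm_ge_zero order_trans)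
qed

context nrm begin

lemma ex_unit: "\<exists>v. N v = 1"
proof -
  obtain b :: "real^'n" where b: "b \<in> Basis" using nonempty_Basis by blast
  then have "b \<noteq> 0" by auto
  then have "N b > 0" using N_nonneg N_zero_iff by (metis less_eq_real_def)
  then have "N ((1 / N b) *\<^sub>R b) = 1" by (simp add: N_scale)
  then show ?thesis by blast
qed

lemma mn_bdd: "bdd_above ((\<lambda>x. N (A *v x)) ` {x. N x = 1})"
proof -
  obtain c1 where c1: "c1 > 0" "\<And>v. N v \<le> c1 * norm v" using N_upper by blast
  obtain c2 where c2: "c2 > 0" "\<And>v. norm v \<le> c2 * N v" using N_lower by blast
  define K where "K = real CARD('n) * real CARD('n) * norm A"
  have K0: "K \<ge> 0" unfolding K_def by simp
  have "N (A *v x) \<le> c1 * (K * c2)" if "N x = 1" for x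
  proof -
    have "N (A *v x) \<le> c1 * norm (A *v x)" by (rule c1(2))
    also have "\<dots> \<le> c1 * (K * norm x)" using norm_mv_le[of A x] c1(1) unfolding K_def
      by (intro mult_left_mono) auto
    also have "\<dots> \<le> c1 * (K * c2)" using c2(2)[of x] that K0 c1(1)
      by (intro mult_left_mono) (auto intro: mult_left_mono)
    finally show ?thesis .
  qed
  then show ?thesis by (auto intro!: bdd_aboveI2)
qed

lemma mn_upper: "N v = 1 \<Longrightarrow> N (A *v v) \<le> mat_norm N A"
  unfolding mat_norm_def by (rule cSUP_upper[OF _ mn_bdd]) auto

lemma mn_apply: "N (A *v v) \<le> mat_norm N A * N v"
proof (cases "v = 0")
  case False
  then have p: "N v > 0" using N_nonneg N_zero_iff by (metis less_eq_real_def)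
  have "N ((1 / N v) *\<^sub>R v) = 1" using p by (simp add: N_scale)
  from mn_upper[OF this, of A] have "N (A *v v) / N v \<le> mat_norm N A"
    using p by (simp add: matrix_vector_mult_scaleR N_scale)
  then show ?thesis using p by (simp add: field_simps)
qed simp

lemma mn_least: "(\<And>v. N v = 1 \<Longrightarrow> N (A *v v) \<le> K) \<Longrightarrow> mat_norm N A \<le> K"
  unfolding mat_norm_def using ex_unit by (intro cSUP_least) auto

lemma mn_add: "mat_norm N (A + B) \<le> mat_norm N A + mat_norm N B"
  using mn_upper[of _ A] mn_upper[of _ B] N_tri
  by (intro mn_least) (simp add: matrix_vector_mult_add_rdistrib, smt (verit))

lemma mn_scale: "0 \<le> s \<Longrightarrow> mat_norm N (s *\<^sub>R A) \<le> s * mat_norm N A"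
  using mn_upper[of _ A]
  by (intro mn_least) (simp add: scaleR_matrix_vector_assoc[symmetric] N_scale mult_left_mono)

lemma mn_id_le: "mat_norm N (mat 1) \<le> 1"
  by (intro mn_least) simp

lemma mn_id_ge: "1 \<le> mat_norm N (mat 1)"
  using ex_unit mn_upper[of _ "mat 1"] by force

lemma mn_diff: "mat_norm N A \<le> mat_norm N B + mat_norm N (A - B)"
  using mn_add[of B "A - B"] by simp

lemma mn_le_norm: "\<exists>Cm>0. \<forall>A. mat_norm N A \<le> Cm * norm A"
proof -
  obtain c1 where c1: "c1 > 0" "\<And>v. N v \<le> c1 * norm v" using N_upper by blast
  obtain c2 where c2: "c2 > 0" "\<And>v. norm v \<le> c2 * N v" using N_lower by blast
  define Cm where "Cm = c1 * c2 * real CARD('n) * real CARD('n)"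
  have "mat_norm N A \<le> Cm * norm A" for A
  proof (rule mn_least)
    fix v assume v: "N v = 1"
    define K where "K = real CARD('n) * real CARD('n) * norm A"
    have K0: "K \<ge> 0" unfolding K_def by simp
    have "N (A *v v) \<le> c1 * norm (A *v v)" by (rule c1(2))
    also have "\<dots> \<le> c1 * (K * norm v)" using norm_mv_le[of A v] c1(1) unfolding K_def
      by (intro mult_left_mono) auto
    also have "\<dots> \<le> c1 * (K * c2)" using c2(2)[of v] v K0 c1(1)
      by (intro mult_left_mono) (auto intro: mult_left_mono)
    also have "\<dots> = Cm * norm A" unfolding Cm_def K_def by simp
    finally show "N (A *v v) \<le> Cm * norm A" .
  qed
  moreover have "Cm > 0" unfolding Cm_def using c1 c2 by simp
  ultimately show ?thesis by blast
qed

definition qq :: "real \<Rightarrow> real^'n^'n \<Rightarrow> real" where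
  "qq s A = (mat_norm N (mat 1 + s *\<^sub>R A) - 1) / s"

lemma qq_mono:
  assumes "0 < s1" "s1 \<le> s2"
  shows "qq s1 A \<le> qq s2 A"
proof -
  define th where "th = s1 / s2"
  have th: "0 < th" "th \<le> 1" using assms unfolding th_def by auto
  have eq: "mat 1 + s1 *\<^sub>R A = (1 - th) *\<^sub>R mat 1 + th *\<^sub>R (mat 1 + s2 *\<^sub>R A)"
    using assms unfolding th_def by (simp add: algebra_simps)
  have "mat_norm N (mat 1 + s1 *\<^sub>R A) \<le> mat_norm N ((1 - th) *\<^sub>R mat 1) + mat_norm N (th *\<^sub>R (mat 1 + s2 *\<^sub>R A))"
    unfolding eq by (rule mn_add)
  also have "\<dots> \<le> (1 - th) * mat_norm N (mat 1) + th * mat_norm N (mat 1 + s2 *\<^sub>R A)"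
    using th by (intro add_mono mn_scale) auto
  also have "\<dots> \<le> (1 - th) + th * mat_norm N (mat 1 + s2 *\<^sub>R A)"
    using th mn_id_le by (simp add: mult_left_le)
  finally have "mat_norm N (mat 1 + s1 *\<^sub>R A) - 1 \<le> th * (mat_norm N (mat 1 + s2 *\<^sub>R A) - 1)"
    by (simp add: algebra_simps)
  then have "(mat_norm N (mat 1 + s1 *\<^sub>R A) - 1) / s1 \<le> th * (mat_norm N (mat 1 + s2 *\<^sub>R A) - 1) / s1"
    using assms by (simp add: divide_right_mono)
  also have "\<dots> = (mat_norm N (mat 1 + s2 *\<^sub>R A) - 1) / s2"
    using assms unfolding th_def by simp
  finally show ?thesis unfolding qq_def .
qed

lemma qq_lower: "0 < s \<Longrightarrow> - mat_norm N A \<le> qq s A"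
proof -
  assume s: "0 < s"
  have "mat_norm N (mat 1) \<le> mat_norm N (mat 1 + s *\<^sub>R A) + mat_norm N (mat 1 - (mat 1 + s *\<^sub>R A))"
    by (rule mn_diff)
  also have "mat_norm N (mat 1 - (mat 1 + s *\<^sub>R A)) = mat_norm N ((-s) *\<^sub>R A)" by simp
  also have "\<dots> \<le> s * mat_norm N A"
  proof -
    have "mat_norm N ((-s) *\<^sub>R A) = mat_norm N (s *\<^sub>R (- A))" by simp
    also have "\<dots> \<le> s * mat_norm N (- A)" using s by (intro mn_scale) auto
    also have "mat_norm N (- A) = mat_norm N A" unfolding mat_norm_def
      by (simp add: N_minus matrix_vector_mult_diff_rdistrib[of 0 A, simplified])
    finally show ?thesis .
  qed
  finally have "1 - s * mat_norm N A \<le> mat_norm N (mat 1 + s *\<^sub>R A)" using mn_id_ge by linarith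
  then show ?thesis unfolding qq_def using s by (simp add: field_simps)
qed

lemma qq_lip: "0 < s \<Longrightarrow> qq s B \<le> qq s A + mat_norm N (B - A)"
proof -
  assume s: "0 < s"
  have "mat_norm N (mat 1 + s *\<^sub>R B) \<le> mat_norm N (mat 1 + s *\<^sub>R A) + mat_norm N (s *\<^sub>R (B - A))"
    using mn_diff[of "mat 1 + s *\<^sub>R B" "mat 1 + s *\<^sub>R A"] by (simp add: algebra_simps)
  also have "mat_norm N (s *\<^sub>R (B - A)) \<le> s * mat_norm N (B - A)" using s by (intro mn_scale) auto
  finally show ?thesis unfolding qq_def using s by (simp add: field_simps)
qed

lemma log_norm_tendsto: "((\<lambda>s. qq s A) \<longlongrightarrow> log_norm N A) (at_right 0)"
proof -
  define L where "L = Inf ((\<lambda>s. qq s A) ` {0<..})"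
  have bdd: "bdd_below ((\<lambda>s. qq s A) ` {0<..})" using qq_lower by (auto intro!: bdd_belowI2)
  have lim: "((\<lambda>s. qq s A) \<longlongrightarrow> L) (at_right 0)"
  proof (rule order_tendstoI)
    fix a assume "a < L"
    have "\<forall>s>0. a < qq s A" using cInf_lower[OF _ bdd] \<open>a < L\<close> unfolding L_def
      by (meson greaterThan_iff image_eqI less_le_trans)
    then show "eventually (\<lambda>s. a < qq s A) (at_right 0)"
      by (auto simp: eventually_at_right_field intro: exI[of _ 1])
  next
    fix a assume "L < a"
    then obtain s0 where s0: "s0 > 0" "qq s0 A < a"
      unfolding L_def using cInf_lessD[of "(\<lambda>s. qq s A) ` {0<..}" a] by auto
    have "\<forall>s. 0 < s \<and> s < s0 \<longrightarrow> qq s A < a" using qq_mono[of _ s0 A] s0 by force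
    then show "eventually (\<lambda>s. qq s A < a) (at_right 0)"
      using s0 by (auto simp: eventually_at_right_field)
  qed
  have "log_norm N A = L" unfolding log_norm_def
    using tendsto_Lim[OF trivial_limit_at_right_real lim] by (simp add: qq_def)
  then show ?thesis using lim by simp
qed

lemma log_norm_small:
  assumes "log_norm N A < c"
  shows "\<exists>s0>0. \<forall>s. 0 < s \<and> s \<le> s0 \<longrightarrow> qq s A < c"
proof -
  have "eventually (\<lambda>s. qq s A < c) (at_right 0)"
    using order_tendstoD(2)[OF log_norm_tendsto assms] .
  then obtain b where b: "b > 0" "\<And>s. 0 < s \<Longrightarrow> s < b \<Longrightarrow> qq s A < c"
    by (auto simp: eventually_at_right_field)
  show ?thesis
    using b qq_mono[of _ "b/2" A] by (intro exI[of _ "b/2"]) force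
qed

end

lemma dini_mono_aux:
  fixes f :: "real \<Rightarrow> real"
  assumes ab: "a < a'" "a' \<le> b" and cont: "continuous_on {a..b} f"
    and loc: "\<And>r. a < r \<Longrightarrow> r < b \<Longrightarrow> \<exists>\<eta>>0. \<forall>u. r < u \<and> u < r + \<eta> \<longrightarrow> f u \<le> f r"
  shows "f b \<le> f a'"
proof -
  define S where "S = {a'..b} \<inter> f -` {..f a'}"
  have cS: "closed S" unfolding S_def
    by (rule continuous_closed_preimage) (use ab in \<open>auto intro: continuous_on_subset[OF cont]\<close>)
  have aS: "a' \<in> S" using ab unfolding S_def by auto
  have bS: "bdd_above S" unfolding S_def by (auto intro: bdd_aboveI2[of _ _ b])
  define m where "m = Sup S"
  have mS: "m \<in> S" unfolding m_def using closed_contains_Sup[OF _ bS cS] aS by blast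
  have mb: "m \<le> b" using mS unfolding S_def by auto
  have "m = b"
  proof (rule ccontr)
    assume "m \<noteq> b"
    with mb have mlt: "m < b" by simp
    have am: "a < m" using mS ab unfolding S_def by auto
    obtain \<eta> where eta: "\<eta> > 0" "\<And>u. m < u \<Longrightarrow> u < m + \<eta> \<Longrightarrow> f u \<le> f m" using loc[OF am mlt] by blast
    define k where "k = min \<eta> (b - m)"
    define u where "u = m + k / 2"
    have kk: "k \<le> b - m" "k \<le> \<eta>" "k > 0" using eta mlt unfolding k_def by auto
    have u1: "m < u" using u_def kk by linarith
    have u2: "u < m + \<eta>" using u_def kk by linarith
    have u3: "u \<le> b" using u_def kk by linarith
    note u = u1 u2 u3
    have "f u \<le> f a'" using eta(2)[OF u(1,2)] mS unfolding S_def by auto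
    then have "u \<in> S" using u mS unfolding S_def by auto
    then have "u \<le> m" unfolding m_def by (rule cSup_upper[OF _ bS])
    with u show False by simp
  qed
  then show ?thesis using mS unfolding S_def by auto
qed

lemma dini_mono:
  fixes f :: "real \<Rightarrow> real"
  assumes ab: "a \<le> b" and cont: "continuous_on {a..b} f"
    and loc: "\<And>r. a < r \<Longrightarrow> r < b \<Longrightarrow> \<exists>\<eta>>0. \<forall>u. r < u \<and> u < r + \<eta> \<longrightarrow> f u \<le> f r"
  shows "f b \<le> f a"
proof (cases "a = b")
  case False
  with ab have ab': "a < b" by simp
  show ?thesis
  proof (rule ccontr)
    assume "\<not> f b \<le> f a"
    then have e: "f b - f a > 0" by simp
    have "continuous (at a within {a..b}) f" using cont ab by (simp add: continuous_on_eq_continuous_within)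
    then obtain d where d: "d > 0" "\<And>x. x \<in> {a..b} \<Longrightarrow> dist x a < d \<Longrightarrow> dist (f x) (f a) < f b - f a"
      using e unfolding continuous_within_eps_delta by blast
    define k where "k = min d (b - a)"
    define a' where "a' = a + k / 2"
    have mm: "k \<le> b - a" "k \<le> d" "k > 0" using d ab' unfolding k_def by auto
    have a1: "a < a'" using a'_def mm by linarith
    have a2: "a' \<le> b" using a'_def mm by linarith
    have a3: "dist a' a < d" using a'_def mm by (simp add: dist_real_def)
    note a' = a1 a2 a3
    have "f b \<le> f a'" by (rule dini_mono_aux[OF a'(1,2) cont loc])
    moreover have "dist (f a') (f a) < f b - f a" using d(2)[of a'] a' by auto
    ultimately show False by (simp add: dist_real_def)
  qed
qed simp


primrec picard :: "('a::banach \<Rightarrow> 'a) \<Rightarrow> 'a \<Rightarrow> nat \<Rightarrow> real \<Rightarrow> 'a" where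
  "picard f x0 0 = (\<lambda>t. x0)"
| "picard f x0 (Suc k) = (\<lambda>t. x0 + integral {0..t} (\<lambda>s. f (picard f x0 k s)))"

lemma picard_cont:
  assumes "continuous_on UNIV f"
  shows "continuous_on {0..T} (picard f x0 k)"
proof (induction k)
  case 0 then show ?case by simp
next
  case (Suc k)
  have c: "continuous_on {0..T} (\<lambda>s. f (picard f x0 k s))"
    using continuous_on_compose2[OF assms Suc] by simp
  show ?case
    using indefinite_integral_continuous_1[OF integrable_continuous_real[OF c]]
    by (simp add: continuous_on_add)
qed

lemma picard_bound:
  fixes f :: "'a::banach \<Rightarrow> 'a"
  assumes cf: "continuous_on UNIV f" and lip: "\<And>u v. norm (f u - f v) \<le> L * norm (u - v)" and L0: "0 \<le> L"
  shows "0 \<le> t \<Longrightarrow> norm (picard f x0 (Suc k) t - picard f x0 k t)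
           \<le> norm (f x0) * L ^ k * t ^ Suc k / fact (Suc k)"
proof (induction k arbitrary: t)
  case 0
  then show ?case by (simp add: integral_const_real)
next
  case (Suc k)
  let ?M = "norm (f x0)"
  let ?X = "picard f x0"
  have c1: "continuous_on {0..t} (\<lambda>s. f (?X (Suc k) s))"
    by (rule continuous_on_compose2[OF cf picard_cont[OF cf]]) auto
  have c2: "continuous_on {0..t} (\<lambda>s. f (?X k s))"
    using continuous_on_compose2[OF cf picard_cont[OF cf]] by simp
  have "?X (Suc (Suc k)) t - ?X (Suc k) t = integral {0..t} (\<lambda>s. f (?X (Suc k) s) - f (?X k s))"
    using integral_diff[OF integrable_continuous_real[OF c1] integrable_continuous_real[OF c2]] by simp
  also have "norm \<dots> \<le> integral {0..t} (\<lambda>s. (?M * L ^ Suc k / fact (Suc k)) * s ^ Suc k)"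
  proof (rule integral_norm_bound_integral)
    show "(\<lambda>s. f (?X (Suc k) s) - f (?X k s)) integrable_on {0..t}"
      by (intro integrable_continuous_real continuous_on_diff c1 c2)
    show "(\<lambda>s. (?M * L ^ Suc k / fact (Suc k)) * s ^ Suc k) integrable_on {0..t}"
      by (intro integrable_continuous_real continuous_intros)
    fix s assume s: "s \<in> {0..t}"
    have "norm (f (?X (Suc k) s) - f (?X k s)) \<le> L * norm (?X (Suc k) s - ?X k s)" by (rule lip)
    also have "\<dots> \<le> L * (?M * L ^ k * s ^ Suc k / fact (Suc k))"
      using Suc.IH[of s] s L0 by (intro mult_left_mono) auto
    also have "\<dots> = (?M * L ^ Suc k / fact (Suc k)) * s ^ Suc k" by simp
    finally show "norm (f (?X (Suc k) s) - f (?X k s)) \<le> (?M * L ^ Suc k / fact (Suc k)) * s ^ Suc k" .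
  qed
  also have "integral {0..t} (\<lambda>s. (?M * L ^ Suc k / fact (Suc k)) * s ^ Suc k)
      = ?M * L ^ Suc k * t ^ Suc (Suc k) / fact (Suc (Suc k))"
  proof -
    let ?c = "?M * L ^ Suc k / fact (Suc k)"
    have "((\<lambda>s. ?c * s ^ Suc k) has_integral ((\<lambda>s. ?c * (s ^ Suc (Suc k) / real (Suc (Suc k)))) t - (\<lambda>s. ?c * (s ^ Suc (Suc k) / real (Suc (Suc k)))) 0)) {0..t}"
    proof (rule fundamental_theorem_of_calculus)
      show "0 \<le> t" by fact
      fix s assume "s \<in> {0..t}"
      have d1: "((\<lambda>s. s ^ Suc (Suc k)) has_real_derivative real (Suc (Suc k)) * s ^ Suc k) (at s within {0..t})"
        using DERIV_pow[of "Suc (Suc k)" s "{0..t}"] by simp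
      have d2: "((\<lambda>s. ?c * (s ^ Suc (Suc k) / real (Suc (Suc k)))) has_real_derivative ?c * (real (Suc (Suc k)) * s ^ Suc k / real (Suc (Suc k)))) (at s within {0..t})"
        by (intro DERIV_cmult DERIV_cdivide d1)
      have e: "?c * (real (Suc (Suc k)) * s ^ Suc k / real (Suc (Suc k))) = ?c * s ^ Suc k"
        by (simp del: of_nat_Suc)
      show "((\<lambda>s. ?c * (s ^ Suc (Suc k) / real (Suc (Suc k)))) has_vector_derivative ?c * s ^ Suc k) (at s within {0..t})"
        using d2[unfolded e] by (simp only: has_real_derivative_iff_has_vector_derivative)
    qed
    then have "integral {0..t} (\<lambda>s. ?c * s ^ Suc k) = ?c * (t ^ Suc (Suc k) / real (Suc (Suc k))) - ?c * (0 ^ Suc (Suc k) / real (Suc (Suc k)))"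
      by (rule integral_unique)
    also have "\<dots> = ?c * (t ^ Suc (Suc k) / real (Suc (Suc k)))" by simp
    also have "\<dots> = ?M * L ^ Suc k * t ^ Suc (Suc k) / fact (Suc (Suc k))"
      by (simp add: field_simps)
    finally show ?thesis .
  qed
  finally show ?case by simp
qed

lemma uniform_limit_lip_comp:
  fixes f :: "'a::real_normed_vector \<Rightarrow> 'b::real_normed_vector"
  assumes u: "uniform_limit S X x F" and lip: "\<And>u v. norm (f u - f v) \<le> L * norm (u - v)" and L0: "0 \<le> L"
  shows "uniform_limit S (\<lambda>n t. f (X n t)) (\<lambda>t. f (x t)) F"
  unfolding uniform_limit_iff
proof (intro allI impI)
  fix e :: real assume e: "e > 0"
  have "e / (L + 1) > 0" using e L0 by simp
  then have ev: "\<forall>\<^sub>F n in F. \<forall>t\<in>S. dist (X n t) (x t) < e / (L + 1)"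
    using u unfolding uniform_limit_iff by blast
  show "\<forall>\<^sub>F n in F. \<forall>t\<in>S. dist (f (X n t)) (f (x t)) < e"
    using ev
  proof eventually_elim
    case (elim n)
    show ?case
    proof
      fix t assume t: "t \<in> S"
      have "dist (f (X n t)) (f (x t)) \<le> L * dist (X n t) (x t)" using lip by (simp add: dist_norm)
      also have "\<dots> \<le> L * (e / (L + 1))" using elim t L0 by (intro mult_left_mono) auto
      also have "\<dots> < e" using e L0 by (simp add: field_simps)
      finally show "dist (f (X n t)) (f (x t)) < e" .
    qed
  qed
qed

lemma picard_exists:
  fixes f :: "'a::banach \<Rightarrow> 'a"
  assumes lip: "\<And>u v. norm (f u - f v) \<le> L * norm (u - v)" and L0: "0 \<le> L"
  shows "\<exists>x. x 0 = x0 \<and> (\<forall>t\<ge>0. (x has_vector_derivative f (x t)) (at t within {0..}))"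
proof -
  have cf: "continuous_on UNIV f"
    by (intro lipschitz_on_continuous_on[of L] lipschitz_onI) (use lip L0 in \<open>auto simp: dist_norm\<close>)
  let ?M = "norm (f x0)"
  let ?X = "picard f x0"
  define D where "D k t = ?X (Suc k) t - ?X k t" for k t
  define x where "x t = x0 + suminf (\<lambda>i. D i t)" for t
  have tele: "?X n t = x0 + (\<Sum>i<n. D i t)" for n t
    unfolding D_def by (subst sum_lessThan_telescope) simp
  have ulim: "uniform_limit {0..T} ?X x sequentially" for T
  proof -
    have bnd: "norm (D k t) \<le> ?M * T * (L * T) ^ k / fact k" if t: "t \<in> {0..T}" for k t
    proof -
      have "norm (D k t) \<le> ?M * L ^ k * t ^ Suc k / fact (Suc k)"
        unfolding D_def using picard_bound[OF cf lip L0] t by auto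
      also have "\<dots> \<le> ?M * L ^ k * T ^ Suc k / fact (Suc k)"
        using t L0 by (intro divide_right_mono mult_left_mono power_mono) auto
      also have "\<dots> \<le> ?M * L ^ k * T ^ Suc k / fact k"
        using t L0 by (intro divide_left_mono mult_nonneg_nonneg) (auto simp: fact_mono)
      also have "\<dots> = ?M * T * (L * T) ^ k / fact k" by (simp add: power_mult_distrib)
      finally show ?thesis .
    qed
    have sm: "summable (\<lambda>k. ?M * T * (L * T) ^ k / fact k)"
      using summable_mult[OF summable_exp[of "L * T"], of "?M * T"]
      by (simp add: field_simps)
    have "uniform_limit {0..T} (\<lambda>n t. \<Sum>i<n. D i t) (\<lambda>t. suminf (\<lambda>i. D i t)) sequentially"
      by (rule Weierstrass_m_test[OF bnd sm])
    then have "uniform_limit {0..T} (\<lambda>n t. x0 + (\<Sum>i<n. D i t)) (\<lambda>t. x0 + suminf (\<lambda>i. D i t)) sequentially"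
      by (intro uniform_limit_add uniform_limit_const)
    then show ?thesis unfolding tele[symmetric] x_def .
  qed
  have xcont: "continuous_on {0..T} x" for T
    by (rule uniform_limit_theorem[OF _ ulim[of T]]) (rule always_eventually, rule allI, rule picard_cont[OF cf], simp)
  have fxcont: "continuous_on {0..T} (\<lambda>s. f (x s))" for T
    using continuous_on_compose2[OF cf xcont] by simp
  have xint: "x u = x0 + integral {0..u} (\<lambda>s. f (x s))" if u: "0 \<le> u" for u
  proof -
    have ul: "uniform_limit {0..u} (\<lambda>n s. f (?X n s)) (\<lambda>s. f (x s)) sequentially"
      by (rule uniform_limit_lip_comp[OF ulim lip L0])
    have cX: "continuous_on {0..u} (\<lambda>s. f (?X n s))" for n
      by (rule continuous_on_compose2[OF cf picard_cont[OF cf]]) auto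
    obtain I J where IJ: "\<And>n. ((\<lambda>s. f (?X n s)) has_integral I n) {0..u}"
      "((\<lambda>s. f (x s)) has_integral J) {0..u}" "(I \<longlonglongrightarrow> J)"
      using uniform_limit_integral[OF ul cX sequentially_bot] by blast
    have iI: "integral {0..u} (\<lambda>s. f (?X n s)) = I n" for n
      using IJ(1) integral_unique by blast
    have "(\<lambda>n. ?X (Suc n) u) \<longlonglongrightarrow> x0 + J"
      using IJ(3) by (simp add: iI tendsto_add)
    moreover have "(\<lambda>n. ?X n u) \<longlonglongrightarrow> x u"
      using tendsto_uniform_limitI[OF ulim[of u]] u by simp
    then have "(\<lambda>n. ?X (Suc n) u) \<longlonglongrightarrow> x u"
      by (rule LIMSEQ_Suc)
    ultimately have "x u = x0 + J" using LIMSEQ_unique by blast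
    then show ?thesis using IJ(2) by (simp add: integral_unique)
  qed
  have "(x has_vector_derivative f (x t)) (at t within {0..})" if t: "0 \<le> t" for t
  proof -
    define T where "T = t + 1"
    have "((\<lambda>u. x0 + integral {0..u} (\<lambda>s. f (x s))) has_vector_derivative f (x t)) (at t within {0..T})"
      using integral_has_vector_derivative[OF fxcont[of T], of t] t unfolding T_def
      by (auto intro!: derivative_eq_intros)
    then have d: "(x has_vector_derivative f (x t)) (at t within {0..T})"
      by (rule has_vector_derivative_transform[rotated 2]) (use t xint T_def in auto)
    have "at t within {0..} = at t within {0..T}"
      by (rule at_within_nhd[of _ "{..<T}"]) (use t T_def in auto)
    then show ?thesis using d by simp
  qed
  moreover have "x 0 = x0" using xint[of 0] by simp
  ultimately show ?thesis by blast
qed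


lemma jac_deriv:
  fixes h :: "real^'n \<Rightarrow> real^'n"
  assumes "h differentiable (at x)"
  shows "(h has_derivative (\<lambda>v. Defs.jacobian h x *v v)) (at x)"
proof -
  have "Defs.jacobian h x = Cartesian_Euclidean_Space.jacobian h (at x)"
    by (simp add: Defs.jacobian_def Cartesian_Euclidean_Space.jacobian_def)
  then show ?thesis using jacobian_works assms by metis
qed

context nrm begin

lemma seg_contract:
  fixes h :: "real^'n \<Rightarrow> real^'n"
  assumes diff: "\<forall>x. h differentiable (at x)"
    and good: "\<And>w. w \<in> G \<Longrightarrow> mat_norm N (mat 1 + s *\<^sub>R Defs.jacobian h w) \<le> Lc"
    and seg: "closed_segment q p \<subseteq> G"
  shows "N ((p + s *\<^sub>R h p) - (q + s *\<^sub>R h q)) \<le> Lc * N (p - q)"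
proof (cases "p = q")
  case True then show ?thesis by simp
next
  case False
  define d where "d = p - q"
  have d0: "d \<noteq> 0" using False unfolding d_def by simp
  have nd: "norm d > 0" using d0 by simp
  obtain c1 where c1: "c1 > 0" "\<And>v. N v \<le> c1 * norm v" using N_upper by blast
  define F where "F v = v + s *\<^sub>R h v" for v
  have hc: "continuous_on UNIV h"
    using diff by (intro differentiable_imp_continuous_on) (simp add: differentiable_on_def differentiable_at_withinI)
  show ?thesis
  proof (rule field_le_epsilon)
    fix e :: real assume e: "e > 0"
    define K where "K = Lc * N d + e"
    define phi where "phi r = N (F (q + r *\<^sub>R d) - F q) - K * r" for r
    have cphi: "continuous_on {0..1} phi"
    proof -
      have "continuous_on {0..1} (\<lambda>r. F (q + r *\<^sub>R d) - F q)"
        unfolding F_def by (intro continuous_intros continuous_on_compose2[OF hc]) auto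
      then have "continuous_on {0..1} (\<lambda>r. N (F (q + r *\<^sub>R d) - F q))"
        using continuous_on_compose2[OF N_cont] by blast
      then show ?thesis unfolding phi_def by (intro continuous_intros)
    qed
    have loc: "\<exists>\<eta>>0. \<forall>u. r < u \<and> u < r + \<eta> \<longrightarrow> phi u \<le> phi r" if r: "0 < r" "r < 1" for r
    proof -
      define P where "P = q + r *\<^sub>R d"
      have PG: "P \<in> G"
      proof -
        have "P = (1 - r) *\<^sub>R q + r *\<^sub>R p" unfolding P_def d_def by (simp add: algebra_simps)
        then have "P \<in> closed_segment q p" using r unfolding in_segment by (intro exI[of _ r]) auto
        then show ?thesis using seg by blast
      qed
      define J where "J = Defs.jacobian h P"
      have hd: "(h has_derivative (\<lambda>v. J *v v)) (at P)" unfolding J_def using jac_deriv diff by blast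
      define e' where "e' = e / (\<bar>s\<bar> * c1 * norm d + 1)"
      have e': "e' > 0" unfolding e'_def using e c1 by (simp add: add_nonneg_pos)
      obtain dl where dl: "dl > 0" "\<And>y. norm (y - P) < dl \<Longrightarrow> norm (h y - h P - J *v (y - P)) \<le> e' * norm (y - P)"
        using hd e' unfolding has_derivative_at_alt by blast
      define \<eta> where "\<eta> = dl / norm d"
      have eta: "\<eta> > 0" unfolding \<eta>_def using dl nd by simp
      have "phi u \<le> phi r" if u: "r < u" "u < r + \<eta>" for u
      proof -
        define y where "y = q + u *\<^sub>R d"
        have yP: "y - P = (u - r) *\<^sub>R d" unfolding y_def P_def by (simp add: algebra_simps)
        have ny: "norm (y - P) = (u - r) * norm d" using yP u by simp
        have "norm (y - P) < dl" using ny u nd unfolding \<eta>_def by (simp add: field_simps)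
        from dl(2)[OF this] have err: "norm (h y - h P - J *v (y - P)) \<le> e' * ((u - r) * norm d)" using ny by simp
        define err where "err = h y - h P - J *v (y - P)"
        have m: "(mat 1 + s *\<^sub>R J) *v d = d + s *\<^sub>R (J *v d)"
          by (simp add: matrix_vector_mult_add_rdistrib scaleR_matrix_vector_assoc[symmetric])
        have eq: "F y - F P = (u - r) *\<^sub>R ((mat 1 + s *\<^sub>R J) *v d) + s *\<^sub>R err"
          unfolding F_def err_def yP m
          by (simp add: matrix_vector_mult_scaleR algebra_simps y_def P_def)
        have "N (F y - F P) \<le> (u - r) * N ((mat 1 + s *\<^sub>R J) *v d) + \<bar>s\<bar> * N err"
          unfolding eq using N_tri N_scale u by (metis abs_of_pos diff_gt_0_iff_gt)
        also have "\<dots> \<le> (u - r) * (Lc * N d) + \<bar>s\<bar> * (c1 * (e' * ((u - r) * norm d)))"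
        proof (intro add_mono mult_left_mono)
          show "N ((mat 1 + s *\<^sub>R J) *v d) \<le> Lc * N d"
            using mn_apply[of "mat 1 + s *\<^sub>R J" d] good[OF PG] N_nonneg[of d] unfolding J_def
            by (meson mult_right_mono order_trans)
          show "N err \<le> c1 * (e' * ((u - r) * norm d))"
            using c1(2)[of err] err c1(1) unfolding err_def by (meson mult_left_mono order_trans less_imp_le)
        qed (use u in auto)
        also have "\<bar>s\<bar> * (c1 * (e' * ((u - r) * norm d))) = (u - r) * (e * ((\<bar>s\<bar> * c1 * norm d) / (\<bar>s\<bar> * c1 * norm d + 1)))"
          unfolding e'_def by (simp add: field_simps)
        also have "\<dots> \<le> (u - r) * e"
        proof -
          have "(\<bar>s\<bar> * c1 * norm d) / (\<bar>s\<bar> * c1 * norm d + 1) \<le> 1"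
            using c1 nd by (simp add: divide_le_eq_1 add_nonneg_pos)
          then have "e * ((\<bar>s\<bar> * c1 * norm d) / (\<bar>s\<bar> * c1 * norm d + 1)) \<le> e"
            using e by (metis mult_left_le less_imp_le)
          then show ?thesis using u by (intro mult_left_mono) auto
        qed
        finally have A: "N (F y - F P) \<le> K * (u - r)" unfolding K_def by (simp add: algebra_simps)
        have "N (F y - F q) \<le> N (F y - F P) + N (F P - F q)"
          using N_tri[of "F y - F P" "F P - F q"] by simp
        then show ?thesis unfolding phi_def y_def[symmetric] P_def[symmetric] using A
          by (simp add: algebra_simps)
      qed
      then show ?thesis using eta by blast
    qed
    have "phi 1 \<le> phi 0" by (rule dini_mono[OF _ cphi loc]) auto
    then have "N (F p - F q) \<le> K" unfolding phi_def d_def by simp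
    then show "N ((p + s *\<^sub>R h p) - (q + s *\<^sub>R h q)) \<le> Lc * N (p - q) + e"
      unfolding F_def K_def d_def by simp
  qed
qed

end

context nrm begin

lemma good_region:
  fixes h :: "real^'n \<Rightarrow> real^'n" and H :: "(real^'n) set"
  assumes Jc: "continuous_on UNIV (Defs.jacobian h)"
    and Hne: "H \<noteq> {}" and Hb: "bounded H"
    and bdd: "bdd_above ((\<lambda>x. log_norm N (Defs.jacobian h x)) ` H)"
    and neg: "(SUP x\<in>H. log_norm N (Defs.jacobian h x)) < 0"
  shows "\<exists>a>0. \<exists>\<delta>>0. \<exists>s0>0. \<exists>R. H \<subseteq> cball 0 R \<and> \<delta> \<le> 1 \<and>
     (\<forall>w. (\<exists>p\<in>H. norm (w - p) < \<delta>) \<longrightarrow>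
        (\<forall>s. 0 < s \<and> s \<le> s0 \<longrightarrow> mat_norm N (mat 1 + s *\<^sub>R Defs.jacobian h w) \<le> 1 - a * s))"
proof -
  define J where "J = Defs.jacobian h"
  define b where "b = - (SUP x\<in>H. log_norm N (J x))"
  have b0: "b > 0" using neg unfolding b_def J_def by simp
  have hb: "log_norm N (J p) \<le> - b" if "p \<in> H" for p
    unfolding b_def J_def using cSUP_upper[OF that bdd] by simp
  obtain R where R: "R > 0" "\<And>x. x \<in> H \<Longrightarrow> norm x \<le> R" using Hb bounded_pos by blast
  have HR: "H \<subseteq> cball 0 R" using R by auto
  define B1 where "B1 = cball (0::real^'n) (R + 1)"
  obtain Cm where Cm: "Cm > 0" "\<And>A. mat_norm N A \<le> Cm * norm A" using mn_le_norm by blast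
  have uc: "uniformly_continuous_on B1 J"
    unfolding B1_def J_def by (rule compact_uniformly_continuous[OF continuous_on_subset[OF Jc]]) auto
  obtain d1 where d1: "d1 > 0" "\<And>x x'. x \<in> B1 \<Longrightarrow> x' \<in> B1 \<Longrightarrow> dist x' x < d1 \<Longrightarrow> dist (J x') (J x) < b / (4 * Cm)"
    using uc b0 Cm(1) unfolding uniformly_continuous_on_def
    by (metis divide_pos_pos mult_pos_pos zero_less_numeral)
  define \<delta> where "\<delta> = min d1 1 / 2"
  have dpos: "\<delta> > 0" "\<delta> \<le> 1" "2 * \<delta> \<le> d1" unfolding \<delta>_def using d1 by auto
  have "\<forall>p\<in>H. \<exists>s>0. \<forall>s'. 0 < s' \<and> s' \<le> s \<longrightarrow> qq s' (J p) < - (3 / 4) * b"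
  proof (intro ballI log_norm_small)
    fix p assume "p \<in> H"
    with hb[of p] b0 show "log_norm N (J p) < - (3 / 4) * b" by linarith
  qed
  then obtain sp where sp: "\<And>p. p \<in> H \<Longrightarrow> sp p > 0"
    "\<And>p s'. p \<in> H \<Longrightarrow> 0 < s' \<Longrightarrow> s' \<le> sp p \<Longrightarrow> qq s' (J p) < - (3 / 4) * b"
    by metis
  have cov: "closure H \<subseteq> \<Union> ((\<lambda>p. ball p \<delta>) ` H)"
  proof
    fix x assume "x \<in> closure H"
    then obtain y where "y \<in> H" "dist y x < \<delta>" using closure_approachable dpos(1) by blast
    then show "x \<in> \<Union> ((\<lambda>p. ball p \<delta>) ` H)" by auto
  qed
  obtain F where F: "F \<subseteq> H" "finite F" "closure H \<subseteq> \<Union> ((\<lambda>p. ball p \<delta>) ` F)"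
    using compactE_image[of "closure H" H "\<lambda>p. ball p \<delta>"] cov Hb by (auto simp: compact_closure)
  have Fne: "F \<noteq> {}" using F(3) Hne closure_subset by fastforce
  define s0 where "s0 = Min (sp ` F)"
  have s0: "s0 > 0" unfolding s0_def using F Fne sp(1) by (subst Min_gr_iff) auto
  have s0le: "s0 \<le> sp p" if "p \<in> F" for p unfolding s0_def using F that by (intro Min_le) auto
  have main: "mat_norm N (mat 1 + s *\<^sub>R J w) \<le> 1 - (b / 2) * s"
    if w: "p \<in> H" "norm (w - p) < \<delta>" and s: "0 < s" "s \<le> s0" for w p s
  proof -
    have "p \<in> closure H" using w closure_subset by blast
    then obtain p' where p': "p' \<in> F" "dist p' p < \<delta>" using F(3) by (auto simp: dist_commute)
    have p'H: "p' \<in> H" using p' F by blast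
    have "dist w p' \<le> norm (w - p) + dist p' p" by (metis dist_norm dist_commute dist_triangle)
    then have dwp: "dist w p' < d1" using w p' dpos by linarith
    have wB: "w \<in> B1"
    proof -
      have "norm w \<le> norm p + norm (w - p)" by (metis add.commute diff_add_cancel norm_triangle_ineq)
      then show ?thesis unfolding B1_def using R(2)[OF w(1)] w dpos by simp
    qed
    have p'B: "p' \<in> B1" unfolding B1_def using R(2)[OF p'H] by simp
    have dj: "dist (J w) (J p') < b / (4 * Cm)" using d1(2)[OF p'B wB] dwp by simp
    have "qq s (J w) \<le> qq s (J p') + mat_norm N (J w - J p')" by (rule qq_lip[OF s(1)])
    also have "\<dots> \<le> qq s (J p') + Cm * norm (J w - J p')" using Cm(2) by simp
    also have "Cm * norm (J w - J p') < b / 4"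
      using dj Cm(1) by (simp add: dist_norm field_simps)
    also have "qq s (J p') < - (3 / 4) * b" using sp(2)[OF p'H s(1)] s0le[OF p'(1)] s by simp
    finally have "qq s (J w) < - (b / 2)" by simp
    then show ?thesis using s unfolding qq_def by (simp add: field_simps)
  qed
  have m2: "\<forall>w. (\<exists>p\<in>H. norm (w - p) < \<delta>) \<longrightarrow>
        (\<forall>s. 0 < s \<and> s \<le> s0 \<longrightarrow> mat_norm N (mat 1 + s *\<^sub>R Defs.jacobian h w) \<le> 1 - (b / 2) * s)"
    using main unfolding J_def by blast
  have "b / 2 > 0" using b0 by simp
  then show ?thesis using dpos s0 HR m2 by blast
qed

end

lemma mod_lip:
  fixes h :: "real^'n \<Rightarrow> real^'n"
  assumes diff: "\<forall>x. h differentiable (at x)" and Jc: "continuous_on UNIV (Defs.jacobian h)"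
    and r0: "0 \<le> r"
  shows "\<exists>L\<ge>0. \<forall>u v. norm (h (closest_point (cball 0 r) u) - h (closest_point (cball 0 r) v)) \<le> L * norm (u - v)"
proof -
  define B1 where "B1 = cball (0::real^'n) r"
  have cB: "compact B1" unfolding B1_def by simp
  have neB: "B1 \<noteq> {}" unfolding B1_def using r0 by simp
  have "bounded (Defs.jacobian h ` B1)"
    by (rule compact_imp_bounded[OF compact_continuous_image[OF continuous_on_subset[OF Jc] cB]]) auto
  then obtain Bj where Bj: "Bj > 0" "\<And>x. x \<in> B1 \<Longrightarrow> norm (Defs.jacobian h x) \<le> Bj"
    unfolding bounded_pos by auto
  define L where "L = real CARD('n) * real CARD('n) * Bj"
  have L0: "L \<ge> 0" unfolding L_def using Bj by simp
  have lipB: "norm (h x - h y) \<le> L * norm (x - y)" if "x \<in> B1" "y \<in> B1" for x y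
  proof (rule differentiable_bound[where f'="\<lambda>x v. Defs.jacobian h x *v v"])
    show "convex B1" unfolding B1_def by simp
    show "(h has_derivative (\<lambda>v. Defs.jacobian h x *v v)) (at x within B1)" for x
      using jac_deriv diff by (blast intro: has_derivative_at_withinI)
    show "onorm ((*v) (Defs.jacobian h x)) \<le> L" if "x \<in> B1" for x
    proof -
      have "onorm ((*v) (Defs.jacobian h x)) \<le> real CARD('n) * real CARD('n) * norm (Defs.jacobian h x)"
        by (rule onorm_le_matrix_component) (rule order_trans[OF component_le_norm_cart Finite_Cartesian_Product.norm_nth_le])
      also have "\<dots> \<le> L" unfolding L_def using Bj(2)[OF that] by (intro mult_left_mono) auto
      finally show ?thesis .
    qed
  qed (use that in auto)
  have "norm (h (closest_point B1 u) - h (closest_point B1 v)) \<le> L * norm (u - v)" for u v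
  proof -
    have in1: "closest_point B1 u \<in> B1" "closest_point B1 v \<in> B1"
      using closest_point_in_set[of B1] neB unfolding B1_def by auto
    have "norm (h (closest_point B1 u) - h (closest_point B1 v)) \<le> L * norm (closest_point B1 u - closest_point B1 v)"
      by (rule lipB[OF in1])
    also have "\<dots> \<le> L * norm (u - v)"
      using closest_point_lipschitz[of B1 u v] neB L0 unfolding B1_def
      by (intro mult_left_mono) (auto simp: dist_norm)
    finally show ?thesis .
  qed
  then show ?thesis using L0 unfolding B1_def by blast
qed


theorem mainTheorem10:
  fixes N :: "real^'n \<Rightarrow> real" and h :: "real^'n \<Rightarrow> real^'n" and H :: "(real^'n) set"
  assumes "is_norm N"
    and "H \<noteq> {}" and "bounded H"
    and "\<forall>x. h differentiable (at x)" and "continuous_on UNIV (jacobian h)"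
    and "bdd_above ((\<lambda>x. log_norm N (jacobian h x)) ` H)"
    and "(SUP x\<in>H. log_norm N (jacobian h x)) < 0"
  shows "cond_lipschitz_shadowing N h H"
proof -
  interpret nrm N using assms(1) by (rule nrm.intro)
  from good_region[OF assms(5,2,3,6,7)] obtain a \<delta> s0 R where a: "a > 0" and dl0: "\<delta> > 0" and s0: "s0 > 0"
    and rest: "H \<subseteq> cball 0 R \<and> \<delta> \<le> 1 \<and> (\<forall>w. (\<exists>p\<in>H. norm (w - p) < \<delta>) \<longrightarrow>
        (\<forall>s. 0 < s \<and> s \<le> s0 \<longrightarrow> mat_norm N (mat 1 + s *\<^sub>R Defs.jacobian h w) \<le> 1 - a * s))"
    by blast
  have HR: "H \<subseteq> cball 0 R" and dl: "\<delta> > 0" "\<delta> \<le> 1" using rest dl0 by auto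
  have good: "\<And>w s. (\<exists>p\<in>H. norm (w - p) < \<delta>) \<Longrightarrow> 0 < s \<Longrightarrow> s \<le> s0 \<Longrightarrow>
        mat_norm N (mat 1 + s *\<^sub>R Defs.jacobian h w) \<le> 1 - a * s"
    using rest by blast
  obtain p0 where "p0 \<in> H" using assms(2) by blast
  then have "norm p0 \<le> R" using HR by auto
  then have R0: "R \<ge> 0" using norm_ge_zero order_trans by blast
  define B1 where "B1 = cball (0::real^'n) (R + 1)"
  define hm where "hm v = h (closest_point B1 v)" for v
  obtain Lh where Lh: "Lh \<ge> 0" "\<And>u v. norm (hm u - hm v) \<le> Lh * norm (u - v)"
  proof -
    have "0 \<le> R + 1" using R0 by simp
    from mod_lip[OF assms(4,5) this] obtain L where "L \<ge> 0"
      "\<forall>u v. norm (h (closest_point (cball 0 (R + 1)) u) - h (closest_point (cball 0 (R + 1)) v)) \<le> L * norm (u - v)"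
      by blast
    then show ?thesis using that unfolding hm_def B1_def by blast
  qed
  have hm_eq: "hm w = h w" if "w \<in> B1" for w
    unfolding hm_def using that by (simp add: closest_point_self)
  obtain c1 where c1: "c1 > 0" "\<And>v. N v \<le> c1 * norm v" using N_upper by blast
  have ntm: "N (A - B) \<le> N A + N B" for A B :: "real^'n"
    using N_tri[of A "- B"] N_minus[of B] by simp
  obtain c2 where c2: "c2 > 0" "\<And>v. norm v \<le> c2 * N v" using N_lower by blast
  define \<epsilon>0 where "\<epsilon>0 = a * \<delta> / (8 * c2)"
  have e0: "\<epsilon>0 > 0" unfolding \<epsilon>0_def using a dl c2 by simp
  define \<kappa> where "\<kappa> = 1 / a"
  have k0: "\<kappa> > 0" unfolding \<kappa>_def using a by simp
  have main: "\<exists>x. is_solution h \<tau> x \<and> (SUP t\<in>dom_int \<tau>. N (x t - y t)) \<le> \<kappa> * \<epsilon>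
             \<and> bdd_above ((\<lambda>t. N (x t - y t)) ` dom_int \<tau>)"
    if eps: "0 < \<epsilon>" "\<epsilon> \<le> \<epsilon>0" and tau: "0 < \<tau>" and ps: "pseudosolution N h \<tau> y y'"
      and sig: "sigma N h \<tau> y y' \<le> \<epsilon>" and yH: "\<forall>t\<in>dom_int \<tau>. y t \<in> H" for \<epsilon> \<tau> y y'
  proof -
    define D where "D = dom_int \<tau>"
    have D0: "0 \<in> D" unfolding D_def dom_int_def using tau by (simp add: zero_ereal_def)
    have Dsub: "D \<subseteq> {0..}" unfolding D_def dom_int_def by auto
    have Dint: "u \<in> D" if "t \<in> D" "0 \<le> u" "u \<le> t" for t u
      using that unfolding D_def dom_int_def by (auto intro: le_less_trans[of _ "ereal t"])
    have yder: "(y has_vector_derivative y' t) (at t within D)" if "t \<in> D" for t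
      using ps that unfolding pseudosolution_def C1_on_with_def D_def by blast
    have gb: "N (y' t - h (y t)) \<le> \<epsilon>" if "t \<in> D" for t
    proof -
      have "N (y' t - h (y t)) \<le> sigma N h \<tau> y y'"
        unfolding sigma_def using ps that unfolding pseudosolution_def D_def by (intro cSUP_upper) auto
      then show ?thesis using sig by simp
    qed
    obtain x where x0: "x 0 = y 0" and xder0: "\<And>t. t \<ge> 0 \<Longrightarrow> (x has_vector_derivative hm (x t)) (at t within {0..})"
      using picard_exists[OF Lh(2) Lh(1), of "y 0"] by blast
    have xder: "(x has_vector_derivative hm (x t)) (at t within D)" if "t \<in> D" for t
      using xder0[of t] that Dsub by (auto intro: has_vector_derivative_within_subset)
    have ycont: "continuous_on D y"
      using yder by (auto simp: continuous_on_eq_continuous_within intro: has_vector_derivative_continuous)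
    have xcont: "continuous_on D x"
      using xder by (auto simp: continuous_on_eq_continuous_within intro: has_vector_derivative_continuous)
    define phi where "phi t = N (x t - y t)" for t
    have phicont: "continuous_on D phi"
      unfolding phi_def using continuous_on_compose2[OF N_cont continuous_on_diff[OF xcont ycont]] by blast
    define c where "c = \<epsilon> / a"
    have cpos: "c > 0" unfolding c_def using eps a by simp
    have nearnorm: "norm (x t - y t) < \<delta> / 4" if "phi t < 2 * c" for t
    proof -
      have "norm (x t - y t) \<le> c2 * phi t" unfolding phi_def by (rule c2(2))
      also have "\<dots> < c2 * (2 * c)" using that c2 by simp
      also have "\<dots> \<le> c2 * (2 * (\<epsilon>0 / a))" unfolding c_def using eps a c2 by (simp add: divide_right_mono)
      also have "\<dots> = \<delta> / 4" unfolding \<epsilon>0_def using a c2 by (simp add: field_simps)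
      finally show ?thesis .
    qed
    have xB: "x t \<in> B1" if "t \<in> D" "phi t < 2 * c" for t
    proof -
      have "norm (y t) \<le> R" using yH that HR unfolding D_def by auto
      moreover have "norm (x t) \<le> norm (y t) + norm (x t - y t)"
        by (metis add.commute diff_add_cancel norm_triangle_ineq)
      ultimately show ?thesis unfolding B1_def using nearnorm[OF that(2)] dl by simp
    qed
    have loc: "\<exists>\<eta>>0. \<forall>u. r < u \<and> u < r + \<eta> \<longrightarrow> phi u \<le> phi r"
      if r: "r \<in> D" "c < phi r" "phi r < 2 * c" and t1: "t1 \<in> D" "r < t1" for r t1
    proof -
      define z where "z = x r - y r"
      have nz: "norm z < \<delta> / 4" unfolding z_def using nearnorm r by blast
      have yrH: "y r \<in> H" using yH r unfolding D_def by blast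
      have seg: "closed_segment (y r) (x r) \<subseteq> {w. \<exists>p\<in>H. norm (w - p) < \<delta>}"
      proof
        fix w assume "w \<in> closed_segment (y r) (x r)"
        then obtain th where th: "0 \<le> th" "th \<le> 1" "w = (1 - th) *\<^sub>R y r + th *\<^sub>R x r"
          unfolding in_segment by blast
        have "w - y r = th *\<^sub>R z" unfolding th(3) z_def by (simp add: algebra_simps)
        then have "norm (w - y r) \<le> norm z" using th by (simp add: mult_left_le_one_le)
        then have "norm (w - y r) < \<delta>" using nz dl by simp
        then show "w \<in> {w. \<exists>p\<in>H. norm (w - p) < \<delta>}" using yrH by blast
      qed
      have hmx: "hm (x r) = h (x r)" using hm_eq xB r by blast
      have contr: "N ((x r + s *\<^sub>R h (x r)) - (y r + s *\<^sub>R h (y r))) \<le> (1 - a * s) * phi r"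
        if s: "0 < s" "s \<le> s0" for s
        unfolding phi_def
        by (rule seg_contract[OF assms(4) _ seg]) (use good s in blast)
      define v where "v = h (x r) - y' r"
      have wder: "((\<lambda>t. x t - y t) has_vector_derivative v) (at r within D)"
        unfolding v_def using has_vector_derivative_diff[OF xder[OF r(1)] yder[OF r(1)]] hmx by simp
      define \<gamma> where "\<gamma> = a * phi r - \<epsilon>"
      have g0: "\<gamma> > 0" unfolding \<gamma>_def using r(2) a unfolding c_def by (simp add: field_simps)
      have "\<gamma> / (2 * c1) > 0" using g0 c1 by simp
      then obtain dd where dd: "dd > 0"
        "\<And>u. u \<in> D \<Longrightarrow> norm (u - r) < dd \<Longrightarrow>
           norm ((x u - y u) - (x r - y r) - (u - r) *\<^sub>R v) \<le> \<gamma> / (2 * c1) * norm (u - r)"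
        using wder unfolding has_vector_derivative_def has_derivative_within_alt by blast
      define \<eta> where "\<eta> = min dd (min s0 (t1 - r))"
      have eta: "\<eta> > 0" unfolding \<eta>_def using dd s0 t1 by simp
      have "phi u \<le> phi r" if u: "r < u" "u < r + \<eta>" for u
      proof -
        define s where "s = u - r"
        have s: "0 < s" "s \<le> s0" "s < dd" using u unfolding s_def \<eta>_def by auto
        have r0: "0 \<le> r" using r Dsub by auto
        have uD: "u \<in> D" using Dint[OF t1(1), of u] u r0 unfolding \<eta>_def by auto
        have err: "N ((x u - y u) - z - s *\<^sub>R v) \<le> \<gamma> * s / 2"
        proof -
          have "N ((x u - y u) - z - s *\<^sub>R v) \<le> c1 * norm ((x u - y u) - z - s *\<^sub>R v)" by (rule c1(2))
          also have "\<dots> \<le> c1 * (\<gamma> / (2 * c1) * norm (u - r))"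
            using dd(2)[OF uD] s c1 unfolding z_def s_def by (intro mult_left_mono) auto
          also have "\<dots> = \<gamma> * s / 2" using c1 s unfolding s_def by simp
          finally show ?thesis .
        qed
        have eqz: "z + s *\<^sub>R v = ((x r + s *\<^sub>R h (x r)) - (y r + s *\<^sub>R h (y r))) - s *\<^sub>R (y' r - h (y r))"
          unfolding z_def v_def by (simp add: algebra_simps)
        have "N (z + s *\<^sub>R v) \<le> (1 - a * s) * phi r + s * \<epsilon>"
        proof -
          have "N (z + s *\<^sub>R v) \<le> N ((x r + s *\<^sub>R h (x r)) - (y r + s *\<^sub>R h (y r))) + N (s *\<^sub>R (y' r - h (y r)))"
            unfolding eqz by (rule ntm)
          also have "\<dots> \<le> (1 - a * s) * phi r + s * \<epsilon>"
            using contr[OF s(1,2)] gb[OF r(1)] s by (simp add: N_scale mult_left_mono add_mono)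
          finally show ?thesis .
        qed
        moreover have "phi u \<le> N (z + s *\<^sub>R v) + N ((x u - y u) - z - s *\<^sub>R v)"
          unfolding phi_def using N_tri[of "z + s *\<^sub>R v" "(x u - y u) - z - s *\<^sub>R v"] by simp
        ultimately have "phi u \<le> (1 - a * s) * phi r + s * \<epsilon> + \<gamma> * s / 2" using err by linarith
        also have "\<dots> = phi r - s * \<gamma> / 2" unfolding \<gamma>_def by (simp add: algebra_simps)
        also have "\<dots> \<le> phi r" using s g0 by simp
        finally show ?thesis .
      qed
      then show ?thesis using eta by blast
    qed
    have bound: "phi t \<le> c" if t: "t \<in> D" for t
    proof (rule ccontr)
      assume "\<not> phi t \<le> c"
      then have t1: "phi t > c" by simp
      have t0le: "0 \<le> t" using t Dsub by auto
      have subD: "{0..t} \<subseteq> D" using Dint[OF t] by auto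
      define S where "S = {0..t} \<inter> phi -` {..c}"
      have cS: "closed S" unfolding S_def
        by (rule continuous_closed_preimage) (auto intro: continuous_on_subset[OF phicont subD])
      have phi0: "phi 0 = 0" unfolding phi_def x0 by simp
      have S0: "0 \<in> S" unfolding S_def using t0le phi0 cpos by auto
      have bS: "bdd_above S" unfolding S_def by (auto intro: bdd_aboveI2[of _ _ t])
      define t0 where "t0 = Sup S"
      have t0S: "t0 \<in> S" unfolding t0_def using closed_contains_Sup[OF _ bS cS] S0 by blast
      have t0t: "t0 < t" using t0S t1 unfolding S_def by (cases "t0 = t") auto
      have t00: "0 \<le> t0" using t0S unfolding S_def by auto
      have phit0: "phi t0 \<le> c" using t0S unfolding S_def by auto
      have above: "phi u > c" if "t0 < u" "u \<le> t" for u
      proof (rule ccontr)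
        assume "\<not> c < phi u"
        then have "u \<in> S" unfolding S_def using that t00 by auto
        then have "u \<le> t0" unfolding t0_def by (rule cSup_upper[OF _ bS])
        with that show False by simp
      qed
      have "continuous (at t0 within {0..t}) phi"
        using continuous_on_subset[OF phicont subD] t0t t00
        by (simp add: continuous_on_eq_continuous_within)
      then obtain e where e: "e > 0" "\<And>u. u \<in> {0..t} \<Longrightarrow> dist u t0 < e \<Longrightarrow> dist (phi u) (phi t0) < c"
        using cpos unfolding continuous_within_eps_delta by blast
      define k where "k = min e (t - t0)"
      define t2 where "t2 = t0 + k / 2"
      have kk: "k > 0" "k \<le> e" "k \<le> t - t0" unfolding k_def using e t0t by auto
      have t2a: "t0 < t2" using t2_def kk by linarith
      have t2b: "t2 \<le> t" using t2_def kk by linarith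
      have t2c: "t2 - t0 < e" using t2_def kk by linarith
      note t2 = t2a t2b t2c
      have small: "phi u < 2 * c" if "t0 \<le> u" "u \<le> t2" for u
      proof -
        have "dist (phi u) (phi t0) < c" using e(2)[of u] that t2 t00 by (auto simp: dist_real_def)
        then show ?thesis using phit0 by (simp add: dist_real_def)
      qed
      have "phi t2 \<le> phi t0"
      proof (rule dini_mono[where f=phi and a=t0 and b=t2])
        show "t0 \<le> t2" using t2 by simp
        show "continuous_on {t0..t2} phi"
          by (rule continuous_on_subset[OF phicont]) (use subD t2 t00 in auto)
        fix r assume r: "t0 < r" "r < t2"
        have rD: "r \<in> D" using subD r t2 t00 by auto
        show "\<exists>\<eta>>0. \<forall>u. r < u \<and> u < r + \<eta> \<longrightarrow> phi u \<le> phi r"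
          by (rule loc[OF rD _ _ t]) (use above[of r] small[of r] r t2 in auto)
      qed
      moreover have "phi t2 > c" using above t2 by simp
      ultimately show False using phit0 by simp
    qed
    have sol: "is_solution h \<tau> x"
      unfolding is_solution_def
    proof
      fix t assume t: "t \<in> dom_int \<tau>"
      then have "t \<in> D" unfolding D_def .
      moreover have "phi t < 2 * c" using bound[OF \<open>t \<in> D\<close>] cpos by simp
      ultimately have "hm (x t) = h (x t)" using hm_eq xB by blast
      then show "(x has_vector_derivative h (x t)) (at t within dom_int \<tau>)"
        using xder[OF \<open>t \<in> D\<close>] unfolding D_def by simp
    qed
    have "(SUP t\<in>D. phi t) \<le> c"
      using D0 bound by (intro cSUP_least) auto
    moreover have "bdd_above (phi ` D)" by (rule bdd_aboveI2[of D phi c]) (rule bound)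
    moreover have "c = \<kappa> * \<epsilon>" unfolding c_def \<kappa>_def by simp
    ultimately show ?thesis using sol unfolding phi_def D_def by auto
  qed
  show ?thesis
    unfolding cond_lipschitz_shadowing_def
    apply (rule exI[of _ \<epsilon>0], rule conjI[OF e0], rule exI[of _ \<kappa>], rule conjI[OF k0])
    apply (intro allI impI)
    apply (elim conjE)
    apply (rule main)
         apply assumption+
    done
qed

end
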